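(* Let $G$ be a connected graph, $c\in V(G)$, and run the scan procedure at $c$ (with any processing order). Let $e$ and $f$ be two distinct edges incident to $c$. If $(e,f)\in\overline{\alpha}_c$, then either $e$ and $f$ span no square, or they span a square whose top vertex is not unique or is primal (i.e. lies in $N(c)$). Moreover, every pair $(e,f)$ of distinct edges incident to $c$ that span no square lies in $\overline{\alpha}_c$.
   Context: All graphs are finite, simple, undirected; $N(x)$ is the open neighborhood of $x$. For distinct edges $e=vu$, $f=vw$ sharing the vertex $v$, a square spanned by $e$ and $f$ is a 4-cycle $vuxw$ with $x\ne v$ adjacent to both $u$ and $w$; $x$ is its top vertex. A top vertex $x$ is unique if $|N(x)\cap N(v)|=2$. Scan procedure at $c$: the vertices of $N(c)$ are called primal, and edges incident to $c$ primal edges. Maintain two sets $I$ (incidence list) and $A$ (absence list) of unordered pairs of primal edges, both initially empty, and for every non-primal vertex $w\ne c$ a record of at most two "recorded primal neighbors" (first and second), initially none. Process the neighbors $u$ of $c$ one by one in an arbitrary order, and for each such $u$ process its neighbors $w\neq c$ in an arbitrary order: (1) if $w\in N(c)$, add $\{cu,cw\}$ to $A$; (2) else, if $w$ has no recorded primal neighbor, record $u$ as its first primal neighbor; (3) else, if $w$ has exactly one recorded primal neighbor $v$, record $u$ as its second primal neighbor, and if $\{cu,cv\}\notin I$ add $\{cu,cv\}$ to $I$, otherwise add $\{cu,cv\}$ to $A$; (4) else ($w$ has recorded first and second primal neighbors $v_1,v_2$) add $\{cv_1,cv_2\},\{cv_1,cu\},\{cv_2,cu\}$ to $A$ (the record is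 not changed). After the procedure, $\alpha_c$ is the symmetric relation on primal edges consisting of the pairs in $I$, $\beta_c$ the symmetric relation consisting of the pairs in $A$, and $\overline{\alpha}_c$ the set of pairs of primal edges not in $I$. *)

theory Defs
  imports Main
begin

definition simple_graph :: "'a set \<Rightarrow> ('a \<Rightarrow> 'a \<Rightarrow> bool) \<Rightarrow> bool" where
  "simple_graph V E \<longleftrightarrow> finite V \<and> (\<forall>x y. E x y \<longrightarrow> x \<in> V \<and> y \<in> V)
     \<and> (\<forall>x y. E x y \<longrightarrow> E y x) \<and> (\<forall>x. \<not> E x x)"

definition connected_graph :: "'a set \<Rightarrow> ('a \<Rightarrow> 'a \<Rightarrow> bool) \<Rightarrow> bool" where
  "connected_graph V E \<longleftrightarrow> (\<forall>x\<in>V. \<forall>y\<in>V. E\<^sup>*\<^sup>* x y)"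

definition nbhd :: "('a \<Rightarrow> 'a \<Rightarrow> bool) \<Rightarrow> 'a \<Rightarrow> 'a set" where
  "nbhd E x = {y. E x y}"

text \<open>Edges are 2-element vertex sets; the edge vu is {v,u}.
  A square spanned by vu and vw (sharing v) with top vertex x: 4-cycle v u x w, x \<noteq> v,
  x adjacent to u and w.\<close>
definition spans_square_top ::
  "('a \<Rightarrow> 'a \<Rightarrow> bool) \<Rightarrow> 'a \<Rightarrow> 'a \<Rightarrow> 'a \<Rightarrow> 'a \<Rightarrow> bool" where
  "spans_square_top E v u w x \<longleftrightarrow> E v u \<and> E v w \<and> u \<noteq> w \<and> x \<noteq> v \<and> E u x \<and> E x w"

definition unique_top :: "('a \<Rightarrow> 'a \<Rightarrow> bool) \<Rightarrow> 'a \<Rightarrow> 'a \<Rightarrow> bool" where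
  "unique_top E v x \<longleftrightarrow> card (nbhd E x \<inter> nbhd E v) = 2"

text \<open>Scan state: incidence list I, absence list A (sets of unordered pairs of primal edges,
  a pair {cu,cw} being the set {{c,u},{c,w}}), and the record of recorded primal
  neighbours of each vertex (list of length at most 2, first then second).\<close>
type_synonym 'a scan_state = "'a set set set \<times> 'a set set set \<times> ('a \<Rightarrow> 'a list)"

definition pe :: "'a \<Rightarrow> 'a \<Rightarrow> 'a \<Rightarrow> 'a set set" where
  "pe c u w = {{c,u},{c,w}}"

fun scan_step :: "('a \<Rightarrow> 'a \<Rightarrow> bool) \<Rightarrow> 'a \<Rightarrow> 'a \<Rightarrow> 'a \<Rightarrow> 'a scan_state \<Rightarrow> 'a scan_state" where
  "scan_step E c u w (I, A, R) =
    (if E c w then (I, A \<union> {pe c u w}, R)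
     else (case R w of
        [] \<Rightarrow> (I, A, R(w := [u]))
      | [v] \<Rightarrow> (if pe c u v \<notin> I then (I \<union> {pe c u v}, A, R(w := [v, u]))
                else (I, A \<union> {pe c u v}, R(w := [v, u])))
      | v1 # v2 # _ \<Rightarrow> (I, A \<union> {pe c v1 v2, pe c v1 u, pe c v2 u}, R)))"

definition scan_vertex :: "('a \<Rightarrow> 'a \<Rightarrow> bool) \<Rightarrow> 'a \<Rightarrow> ('a \<Rightarrow> 'a list) \<Rightarrow> 'a
    \<Rightarrow> 'a scan_state \<Rightarrow> 'a scan_state" where
  "scan_vertex E c nbrs u st = fold (scan_step E c u) (nbrs u) st"

definition scan :: "('a \<Rightarrow> 'a \<Rightarrow> bool) \<Rightarrow> 'a \<Rightarrow> 'a list \<Rightarrow> ('a \<Rightarrow> 'a list) \<Rightarrow> 'a scan_state" where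
  "scan E c ord nbrs = fold (scan_vertex E c nbrs) ord ({}, {}, (\<lambda>_. []))"

definition valid_order :: "('a \<Rightarrow> 'a \<Rightarrow> bool) \<Rightarrow> 'a \<Rightarrow> 'a list \<Rightarrow> ('a \<Rightarrow> 'a list) \<Rightarrow> bool" where
  "valid_order E c ord nbrs \<longleftrightarrow> distinct ord \<and> set ord = nbhd E c
     \<and> (\<forall>u\<in>nbhd E c. distinct (nbrs u) \<and> set (nbrs u) = nbhd E u - {c})"

definition alpha_bar :: "('a \<Rightarrow> 'a \<Rightarrow> bool) \<Rightarrow> 'a \<Rightarrow> 'a list \<Rightarrow> ('a \<Rightarrow> 'a list) \<Rightarrow> 'a set set set" where
  "alpha_bar E c ord nbrs =
     {{e, f} | e f. e \<noteq> f \<and> (\<exists>u\<in>nbhd E c. e = {c,u}) \<and> (\<exists>w\<in>nbhd E c. f = {c,w})}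
     - fst (scan E c ord nbrs)"

end

theory Submission
  imports Defs
begin

lemma step_I_mono: "fst st \<subseteq> fst (scan_step E c v y st)"
  by (cases st) (auto split: list.split)

lemma fold_I_mono: "fst st \<subseteq> fst (fold (scan_step E c v) ys st)"
  apply (induction ys arbitrary: st)
   apply (simp_all del: scan_step.simps)
  by (metis step_I_mono subset_trans)

lemma vertex_I_mono: "fst st \<subseteq> fst (scan_vertex E c nbrs v st)"
  unfolding scan_vertex_def by (rule fold_I_mono)

lemma step_R_other: "y \<noteq> x \<Longrightarrow> snd (snd (scan_step E c v y st)) x = snd (snd st) x"
  by (cases st) (auto split: list.split)

lemma fold_R_other: "x \<notin> set ys \<Longrightarrow> snd (snd (fold (scan_step E c v) ys st)) x = snd (snd st) x"
  by (induction ys arbitrary: st) (auto simp del: scan_step.simps simp: step_R_other)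

lemma step_x0: "\<not> E c x \<Longrightarrow> snd (snd st) x = [] \<Longrightarrow> snd (snd (scan_step E c v x st)) x = [v]"
  by (cases st) auto

lemma step_x1: "\<not> E c x \<Longrightarrow> snd (snd st) x = [a] \<Longrightarrow> pe c v a \<in> fst (scan_step E c v x st)"
  by (cases st) auto

lemma step_x1R: "\<not> E c x \<Longrightarrow> snd (snd st) x = [a] \<Longrightarrow> snd (snd (scan_step E c v x st)) x = [a,v]"
  by (cases st) auto

definition inv2 :: "('a \<Rightarrow> 'a \<Rightarrow> bool) \<Rightarrow> 'a \<Rightarrow> 'a scan_state \<Rightarrow> bool" where
  "inv2 E c st \<longleftrightarrow> (\<forall>p\<in>fst st. \<exists>a b y. p = pe c a b \<and> E a y \<and> E b y \<and> y \<noteq> c)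
     \<and> (\<forall>y. \<forall>a\<in>set (snd (snd st) y). E a y)"

lemma step_inv2:
  assumes "inv2 E c st" "E v y" "y \<noteq> c"
  shows "inv2 E c (scan_step E c v y st)"
proof -
  obtain I A R where st: "st = (I, A, R)" by (cases st)
  have hI: "\<forall>p\<in>I. \<exists>a b y. p = pe c a b \<and> E a y \<and> E b y \<and> y \<noteq> c"
    and hR: "\<forall>z. \<forall>a\<in>set (R z). E a z" using assms(1) st by (auto simp: inv2_def)
  show ?thesis
  proof (cases "E c y")
    case True then show ?thesis using assms(1) st by (simp add: inv2_def)
  next
    case False
    show ?thesis
    proof (cases "R y")
      case Nil
      then show ?thesis using False hI hR assms(2) st by (simp add: inv2_def)
    next
      case (Cons a rest)
      show ?thesis
      proof (cases rest)
        case Nil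
        have ay: "E a y" using hR Cons by auto
        have "inv2 E c (I \<union> {pe c v a}, A, R(y := [a, v]))"
          unfolding inv2_def using hI hR ay assms(2,3) by auto
        moreover have "inv2 E c (I, A \<union> {pe c v a}, R(y := [a, v]))"
          unfolding inv2_def using hI hR ay assms(2,3) by auto
        ultimately show ?thesis using False Cons Nil st by simp
      next
        case (Cons b r2)
        then show ?thesis using False \<open>R y = a # rest\<close> hI hR st by (simp add: inv2_def)
      qed
    qed
  qed
qed

lemma fold_inv2: "inv2 E c st \<Longrightarrow> \<forall>y\<in>set ys. E v y \<and> y \<noteq> c \<Longrightarrow> inv2 E c (fold (scan_step E c v) ys st)"
  by (induction ys arbitrary: st) (auto simp del: scan_step.simps simp: step_inv2)

lemma scan_inv2:
  assumes "\<forall>v\<in>set L. \<forall>y\<in>set (nbrs v). E v y \<and> y \<noteq> c"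
  shows "inv2 E c (fold (scan_vertex E c nbrs) L ({}, {}, (\<lambda>_. [])))"
  using assms
proof (induction L rule: rev_induct)
  case Nil then show ?case by (simp add: inv2_def)
next
  case (snoc v L) then show ?case
    by (simp add: scan_vertex_def fold_inv2)
qed

lemma fold_hit0:
  assumes "x \<in> set ys" "distinct ys" "\<not> E c x" "snd (snd st) x = []"
  shows "snd (snd (fold (scan_step E c v) ys st)) x = [v]"
proof -
  obtain as bs where ys: "ys = as @ x # bs" using split_list[OF assms(1)] by blast
  have "x \<notin> set as" "x \<notin> set bs" using assms(2) ys by auto
  then show ?thesis using assms(3,4) ys
    by (simp del: scan_step.simps add: fold_R_other step_x0)
qed

lemma fold_hit1:
  assumes "x \<in> set ys" "distinct ys" "\<not> E c x" "snd (snd st) x = [a]"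
  shows "pe c v a \<in> fst (fold (scan_step E c v) ys st)"
proof -
  obtain as bs where ys: "ys = as @ x # bs" using split_list[OF assms(1)] by blast
  have "x \<notin> set as" "x \<notin> set bs" using assms(2) ys by auto
  then have "snd (snd (fold (scan_step E c v) as st)) x = [a]" using assms(4)
    by (simp del: scan_step.simps add: fold_R_other)
  then have "pe c v a \<in> fst (scan_step E c v x (fold (scan_step E c v) as st))"
    using assms(3) step_x1 by metis
  moreover have "fst (scan_step E c v x (fold (scan_step E c v) as st))
     \<subseteq> fst (fold (scan_step E c v) bs (scan_step E c v x (fold (scan_step E c v) as st)))"
    by (rule fold_I_mono)
  ultimately show ?thesis using ys
    by (simp del: scan_step.simps) blast
qed

lemma scan_inv1:
  assumes nx: "\<not> E c x"
    and hit: "\<forall>v\<in>set L. x \<in> set (nbrs v) \<longleftrightarrow> v = u \<or> v = w"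
    and dn: "\<forall>v\<in>set L. distinct (nbrs v)"
    and dL: "distinct L" and uw: "u \<noteq> w"
  shows "(filter (\<lambda>v. v = u \<or> v = w) L = [] \<longrightarrow>
            snd (snd (fold (scan_vertex E c nbrs) L ({}, {}, (\<lambda>_. [])))) x = []) \<and>
         (\<forall>a. filter (\<lambda>v. v = u \<or> v = w) L = [a] \<longrightarrow>
            snd (snd (fold (scan_vertex E c nbrs) L ({}, {}, (\<lambda>_. [])))) x = [a]) \<and>
         (u \<in> set L \<and> w \<in> set L \<longrightarrow> pe c u w \<in> fst (fold (scan_vertex E c nbrs) L ({}, {}, (\<lambda>_. []))))"
  using hit dn dL
proof (induction L rule: rev_induct)
  case Nil then show ?case by simp
next
  case (snoc v L)
  let ?st = "fold (scan_vertex E c nbrs) L ({}, {}, (\<lambda>_. []))"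
  have IH: "(filter (\<lambda>v. v = u \<or> v = w) L = [] \<longrightarrow> snd (snd ?st) x = []) \<and>
         (\<forall>a. filter (\<lambda>v. v = u \<or> v = w) L = [a] \<longrightarrow> snd (snd ?st) x = [a]) \<and>
         (u \<in> set L \<and> w \<in> set L \<longrightarrow> pe c u w \<in> fst ?st)"
    using snoc by auto
  have vL: "v \<notin> set L" using snoc.prems by auto
  have mono: "fst ?st \<subseteq> fst (scan_vertex E c nbrs v ?st)" by (rule vertex_I_mono)
  show ?case
  proof (cases "v = u \<or> v = w")
    case False
    then have "x \<notin> set (nbrs v)" using snoc.prems by auto
    then have "snd (snd (scan_vertex E c nbrs v ?st)) x = snd (snd ?st) x"
      unfolding scan_vertex_def by (rule fold_R_other)
    then show ?thesis using IH False mono by auto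
  next
    case True
    have xin: "x \<in> set (nbrs v)" and dv: "distinct (nbrs v)" using snoc.prems True by auto
    show ?thesis
    proof (cases "filter (\<lambda>v. v = u \<or> v = w) L")
      case Nil
      then have "snd (snd (scan_vertex E c nbrs v ?st)) x = [v]"
        using IH unfolding scan_vertex_def by (intro fold_hit0[where E=E and c=c, OF xin dv nx]) auto
      moreover have "u \<notin> set L" "w \<notin> set L" using Nil by (auto simp: filter_empty_conv)
      ultimately show ?thesis using True Nil uw by auto
    next
      case (Cons a rest)
      have "a \<in> set (filter (\<lambda>v. v = u \<or> v = w) L)" using Cons by simp
      then have a: "a \<in> set L" "a = u \<or> a = w" by auto
      have rest: "rest = []"
      proof (rule ccontr)
        assume "rest \<noteq> []"
        then obtain b r2 where "rest = b # r2" by (cases rest) auto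
        moreover have "distinct (filter (\<lambda>v. v = u \<or> v = w) L)" using snoc.prems(3) by simp
        ultimately have "b \<in> set (filter (\<lambda>v. v = u \<or> v = w) L)" "b \<noteq> a"
          using Cons by auto
        then have "b \<in> set L" "b = u \<or> b = w" "b \<noteq> a" by auto
        then show False using a True vL uw by auto
      qed
      have "pe c v a \<in> fst (scan_vertex E c nbrs v ?st)"
        using IH Cons rest unfolding scan_vertex_def by (intro fold_hit1[where E=E and c=c, OF xin dv nx]) auto
      moreover have "pe c v a = pe c u w" using True a vL uw unfolding pe_def by auto
      ultimately show ?thesis using True Cons rest a vL by auto
    qed
  qed
qed

lemma ins_eq: "u \<noteq> c \<Longrightarrow> {c,a} = {c,u} \<Longrightarrow> a = u"
  by (auto simp: doubleton_eq_iff)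
lemma pair_eq:
  assumes "{{c,a},{c,b}} = {{c,u},{c,w}}" "u \<noteq> w" "u \<noteq> c" "w \<noteq> c"
  shows "(a = u \<and> b = w) \<or> (a = w \<and> b = u)"
proof -
  have m1: "{c,a} \<in> {{c,u},{c,w}}" "{c,b} \<in> {{c,u},{c,w}}" unfolding assms(1)[symmetric] by simp_all
  have m2: "{c,u} \<in> {{c,a},{c,b}}" "{c,w} \<in> {{c,a},{c,b}}" unfolding assms(1) by simp_all
  have 1: "a = u \<or> a = w" using m1(1) ins_eq[OF assms(3)] ins_eq[OF assms(4)] by blast
  have 2: "b = u \<or> b = w" using m1(2) ins_eq[OF assms(3)] ins_eq[OF assms(4)] by blast
  have 3: "u = a \<or> u = b" using m2(1) ins_eq[OF assms(3), of a] ins_eq[OF assms(3), of b] by auto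
  have 4: "w = a \<or> w = b" using m2(2) ins_eq[OF assms(4), of a] ins_eq[OF assms(4), of b] by auto
  show ?thesis using 1 2 3 4 assms(2) by blast
qed

theorem mainTheorem2:
  assumes "simple_graph V E" and "connected_graph V E" and "c \<in> V"
    and "valid_order E c ord nbrs"
    and "u \<in> nbhd E c" and "w \<in> nbhd E c" and "u \<noteq> w"
  shows "({{c,u},{c,w}} \<in> alpha_bar E c ord nbrs \<longrightarrow>
            (\<not> (\<exists>x. spans_square_top E c u w x)) \<or>
            (\<exists>x. spans_square_top E c u w x \<and> (\<not> unique_top E c x \<or> x \<in> nbhd E c)))
       \<and> ((\<not> (\<exists>x. spans_square_top E c u w x)) \<longrightarrow> {{c,u},{c,w}} \<in> alpha_bar E c ord nbrs)"
proof -
  have sym: "\<And>x y. E x y \<Longrightarrow> E y x" and irr: "\<And>x. \<not> E x x"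
    using assms(1) unfolding simple_graph_def by auto
  have vo: "distinct ord" "set ord = nbhd E c"
    "\<And>v. v \<in> nbhd E c \<Longrightarrow> distinct (nbrs v) \<and> set (nbrs v) = nbhd E v - {c}"
    using assms(4) unfolding valid_order_def by auto
  have Ecu: "E c u" "E c w" using assms(5,6) by (auto simp: nbhd_def)
  have uc: "u \<noteq> c" "w \<noteq> c" using Ecu irr by auto
  define st where "st = scan E c ord nbrs"
  have P: "{{c,u},{c,w}} = pe c u w" by (simp add: pe_def)
  have part1: "{{c,u},{c,w}} \<notin> fst st \<Longrightarrow>
      (\<not> (\<exists>x. spans_square_top E c u w x)) \<or>
      (\<exists>x. spans_square_top E c u w x \<and> (\<not> unique_top E c x \<or> x \<in> nbhd E c))"
  proof (rule ccontr)
    assume notin: "{{c,u},{c,w}} \<notin> fst st"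
    assume neg: "\<not> ?thesis"
    then have "\<exists>x. spans_square_top E c u w x" by blast
    then obtain x where sq: "spans_square_top E c u w x" by blast
    have un: "unique_top E c x" and np: "x \<notin> nbhd E c" using neg sq by blast+
    have xc: "x \<noteq> c" and ux: "E u x" and wx: "E w x"
      using sq sym unfolding spans_square_top_def by auto
    have nx: "\<not> E c x" using np by (simp add: nbhd_def)
    have c2: "card (nbhd E x \<inter> nbhd E c) = 2" using un unfolding unique_top_def .
    have sub: "{u,w} \<subseteq> nbhd E x \<inter> nbhd E c" using ux wx Ecu sym by (auto simp: nbhd_def)
    have fin: "finite (nbhd E x \<inter> nbhd E c)" using c2 by (metis card.infinite zero_neq_numeral)
    have eq: "nbhd E x \<inter> nbhd E c = {u,w}"
      using card_subset_eq[OF fin sub] c2 assms(7) by simp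
    have hit: "\<forall>v\<in>set ord. x \<in> set (nbrs v) \<longleftrightarrow> v = u \<or> v = w"
    proof
      fix v assume v: "v \<in> set ord"
      then have "v \<in> nbhd E c" using vo by simp
      then have "x \<in> set (nbrs v) \<longleftrightarrow> E v x" using vo(3) xc by (auto simp: nbhd_def)
      also have "\<dots> \<longleftrightarrow> v \<in> nbhd E x \<inter> nbhd E c" using \<open>v \<in> nbhd E c\<close> sym
        by (auto simp: nbhd_def)
      finally show "x \<in> set (nbrs v) \<longleftrightarrow> v = u \<or> v = w" using eq by simp
    qed
    have dn: "\<forall>v\<in>set ord. distinct (nbrs v)" using vo by auto
    have "pe c u w \<in> fst st"
    proof -
      have "u \<in> set ord" "w \<in> set ord" using vo(2) assms(5,6) by auto
      then show ?thesis
        using scan_inv1[where E=E and c=c and nbrs=nbrs, OF nx hit dn vo(1) assms(7)]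
        unfolding st_def scan_def by blast
    qed
    then show False using notin P by simp
  qed
  have part2: "\<not> (\<exists>x. spans_square_top E c u w x) \<Longrightarrow> {{c,u},{c,w}} \<notin> fst st"
  proof
    assume nosq: "\<not> (\<exists>x. spans_square_top E c u w x)"
    assume inI: "{{c,u},{c,w}} \<in> fst st"
    have "\<forall>v\<in>set ord. \<forall>y\<in>set (nbrs v). E v y \<and> y \<noteq> c"
    proof (intro ballI)
      fix v y assume v: "v \<in> set ord" and y: "y \<in> set (nbrs v)"
      have "v \<in> nbhd E c" using v vo(2) by simp
      then have "set (nbrs v) = nbhd E v - {c}" using vo(3) by blast
      then show "E v y \<and> y \<noteq> c" using y by (simp add: nbhd_def)
    qed
    then have "inv2 E c st" unfolding st_def scan_def by (rule scan_inv2)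
    then have "\<forall>p\<in>fst st. \<exists>a b y. p = pe c a b \<and> E a y \<and> E b y \<and> y \<noteq> c"
      unfolding inv2_def by (rule conjunct1)
    then have "\<exists>a b y. {{c,u},{c,w}} = pe c a b \<and> E a y \<and> E b y \<and> y \<noteq> c"
      using inI by (rule bspec)
    then obtain a b y where ab: "{{c,u},{c,w}} = pe c a b" "E a y" "E b y" "y \<noteq> c"
      by blast
    have "{{c,a},{c,b}} = {{c,u},{c,w}}" using ab(1)[unfolded pe_def, symmetric] .
    then have "(a = u \<and> b = w) \<or> (a = w \<and> b = u)"
      by (rule pair_eq[OF _ assms(7) uc])
    then have "spans_square_top E c u w y"
    proof
      assume "a = u \<and> b = w" then show ?thesis
        using ab(2,3,4) Ecu assms(7) sym[OF ab(3)] unfolding spans_square_top_def by simp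
    next
      assume "a = w \<and> b = u" then show ?thesis
        using ab(2,3,4) Ecu assms(7) sym[OF ab(2)] unfolding spans_square_top_def by simp
    qed
    then show False using nosq by blast
  qed
  have inbig: "{{c,u},{c,w}} \<in> {{e, f} | e f. e \<noteq> f \<and> (\<exists>u\<in>nbhd E c. e = {c,u}) \<and> (\<exists>w\<in>nbhd E c. f = {c,w})}"
  proof -
    have "{c,u} \<noteq> {c,w}" using ins_eq[OF uc(2), of u] assms(7) by blast
    then show ?thesis
      apply (rule_tac CollectI)
      apply (rule_tac x="{c,u}" in exI, rule_tac x="{c,w}" in exI)
      using assms(5,6) by blast
  qed
  have ab: "alpha_bar E c ord nbrs = {{e, f} | e f. e \<noteq> f \<and> (\<exists>u\<in>nbhd E c. e = {c,u}) \<and> (\<exists>w\<in>nbhd E c. f = {c,w})} - fst st"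
    unfolding alpha_bar_def st_def ..
  show ?thesis
  proof
    show "{{c,u},{c,w}} \<in> alpha_bar E c ord nbrs \<longrightarrow>
            (\<not> (\<exists>x. spans_square_top E c u w x)) \<or>
            (\<exists>x. spans_square_top E c u w x \<and> (\<not> unique_top E c x \<or> x \<in> nbhd E c))"
      using part1 unfolding ab by blast
    show "(\<not> (\<exists>x. spans_square_top E c u w x)) \<longrightarrow> {{c,u},{c,w}} \<in> alpha_bar E c ord nbrs"
      using part2 inbig unfolding ab by blast
  qed
qed

end
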